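(* Let $\mathbf u$ be an infinite word whose language is closed under reversal, and suppose there exists an integer $H$ such that for every factor $f$ of $\mathbf u$ with $|f|\ge H$ the longest palindromic suffix of $f$ occurs exactly once in $f$. Then $$2+\mathcal C(n+1)-\mathcal C(n)=\mathcal P(n+1)+\mathcal P(n)\quad\text{for every } n\ge H.$$
   Context: For a finite word $w$, $\overline{w}$ denotes its reversal; $w$ is a palindrome if $w=\overline w$. The language of $\mathbf u$ is closed under reversal if $\overline w$ is a factor of $\mathbf u$ whenever $w$ is. $\mathcal C(n)$ is the number of distinct factors of $\mathbf u$ of length $n$ and $\mathcal P(n)$ the number of distinct palindromic factors of $\mathbf u$ of length $n$. *)

theory Defs
  imports Main
begin

definition factor :: "(nat \<Rightarrow> 'a) \<Rightarrow> 'a list \<Rightarrow> bool" where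
  "factor u w \<longleftrightarrow> (\<exists>i. w = map u [i..<i + length w])"

definition palindrome :: "'a list \<Rightarrow> bool" where
  "palindrome w \<longleftrightarrow> rev w = w"

definition closed_under_reversal :: "(nat \<Rightarrow> 'a) \<Rightarrow> bool" where
  "closed_under_reversal u \<longleftrightarrow> (\<forall>w. factor u w \<longrightarrow> factor u (rev w))"

definition cplx :: "(nat \<Rightarrow> 'a) \<Rightarrow> nat \<Rightarrow> nat" where
  "cplx u n = card {w. factor u w \<and> length w = n}"

definition pal_cplx :: "(nat \<Rightarrow> 'a) \<Rightarrow> nat \<Rightarrow> nat" where
  "pal_cplx u n = card {w. factor u w \<and> length w = n \<and> palindrome w}"

text \<open>Longest palindromic suffix (the empty suffix is always a palindrome).\<close>
definition lps :: "'a list \<Rightarrow> 'a list" where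
  "lps f = drop (length f - (GREATEST k. k \<le> length f \<and> palindrome (drop (length f - k) f))) f"

definition occurrences :: "'a list \<Rightarrow> 'a list \<Rightarrow> nat" where
  "occurrences p f = card {j. j + length p \<le> length f \<and> take (length p) (drop j f) = p}"

end

theory Submission
  imports Defs
begin


definition seg :: "(nat \<Rightarrow> 'a) \<Rightarrow> nat \<Rightarrow> nat \<Rightarrow> 'a list" where
  "seg u a l = map u [a..<a+l]"

lemma length_seg[simp]: "length (seg u a l) = l" by (simp add: seg_def)
lemma take_seg: "m \<le> l \<Longrightarrow> take m (seg u a l) = seg u a m"
  by (simp add: seg_def take_map)
lemma drop_seg: "m \<le> l \<Longrightarrow> drop m (seg u a l) = seg u (a+m) (l-m)"
  by (simp add: seg_def drop_map)
lemma factor_seg: "factor u (seg u a l)" by (auto simp: factor_def seg_def)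
lemma factor_iff: "factor u w \<longleftrightarrow> (\<exists>i. w = seg u i (length w))"
  by (simp add: factor_def seg_def)

lemma lps_facts:
  fixes f :: "'a list"
  defines "K \<equiv> GREATEST k. k \<le> length f \<and> palindrome (drop (length f - k) f)"
  shows "K \<le> length f" "palindrome (drop (length f - K) f)" "lps f = drop (length f - K) f"
proof -
  have p0: "0 \<le> length f \<and> palindrome (drop (length f - 0) f)" by (simp add: palindrome_def)
  have "K \<le> length f \<and> palindrome (drop (length f - K) f)"
    unfolding K_def
    by (rule GreatestI_nat[where P="\<lambda>k. k \<le> length f \<and> palindrome (drop (length f - k) f)" and k=0 and b="length f"])
       (use p0 in auto)
  then show "K \<le> length f" "palindrome (drop (length f - K) f)" by auto
  show "lps f = drop (length f - K) f" by (simp add: lps_def K_def)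
qed

lemma card_not1:
  assumes "finite S" "a \<in> S" "b \<in> S" "a \<noteq> b" shows "card S \<noteq> 1"
  using assms by (metis card_1_singletonE singletonD)

lemma occ_not1:
  assumes "a \<noteq> b" "a + length p \<le> length f" "take (length p) (drop a f) = p"
     "b + length p \<le> length f" "take (length p) (drop b f) = p"
  shows "occurrences p f \<noteq> 1"
  unfolding occurrences_def
proof (rule card_not1[of _ a b])
  show "finite {j. j + length p \<le> length f \<and> take (length p) (drop j f) = p}"
    by (rule finite_subset[of _ "{..length f}"]) auto
qed (use assms in auto)

lemma key:
  fixes G x :: "'a list"
  assumes len: "length G \<ge> n+1"
    and x: "x = drop (length G - n) G"
    and start: "take n G = x \<or> take n G = rev x"
    and interior: "\<And>q. 0 < q \<Longrightarrow> q + n < length G \<Longrightarrow> take n (drop q G) \<noteq> x \<and> take n (drop q G) \<noteq> rev x"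
  shows "lps G = G \<or> occurrences (lps G) G \<noteq> 1"
proof -
  define L where "L = length G"
  define K where "K = (GREATEST k. k \<le> length G \<and> palindrome (drop (length G - k) G))"
  have K1: "K \<le> L" and K2: "palindrome (drop (L - K) G)" and K3: "lps G = drop (L - K) G"
    using lps_facts[of G] unfolding K_def L_def by auto
  define s where "s = lps G"
  have ls: "length s = K" using K1 K3 s_def L_def by simp
  have socc: "take (length s) (drop (L - length s) G) = s" using K3 s_def ls L_def by simp
  have lx: "length x = n" using x len by simp
  show ?thesis
  proof (cases "K \<ge> n")
    case True
    define q where "q = L - K"
    have ds: "drop (K - n) s = x" using K3 s_def x L_def True K1 by (simp add: add.commute)
    have "take n (drop q G) = take n s" using K3 s_def q_def by (simp add: ls)
    also have "\<dots> = take n (rev s)" using K2 K3 s_def by (simp add: palindrome_def)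
    also have "\<dots> = rev (drop (K - n) s)" using rev_drop[of "K-n" s] ls True by simp
    finally have tq: "take n (drop q G) = rev x" using ds by simp
    show ?thesis
    proof (cases "q = 0")
      case True then show ?thesis using K3 q_def by simp
    next
      case False
      with interior[of q] tq have "\<not> q + n < L" using L_def by auto
      then have Kn: "K = n" using q_def K1 True by simp
      then have sx: "s = x" using K3 s_def x L_def by simp
      have "rev x = x" using tq Kn sx ls socc q_def by simp
      then have t0: "take n G = x" using start by auto
      show ?thesis unfolding s_def[symmetric]
        by (intro disjI2 occ_not1[of 0 "L - n"]) (use Kn sx t0 len L_def socc ls lx in auto)
    qed
  next
    case False
    have sdx: "s = drop (n - K) x" using K3 s_def x L_def False len by (simp add: add.commute)
    show ?thesis
    proof (cases "take n G = x")
      case True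
      have "take K (drop (n-K) G) = drop (n-K) (take n G)" using False by (simp add: drop_take)
      then have "take K (drop (n-K) G) = s" using True sdx by simp
      then show ?thesis unfolding s_def[symmetric]
        by (intro disjI2 occ_not1[of "n-K" "L - K"]) (use False len L_def socc ls in auto)
    next
      case f2: False
      then have t: "take n G = rev x" using start by auto
      have "take K G = take K (take n G)" using False by simp
      also have "\<dots> = take K (rev x)" using t by simp
      also have "\<dots> = rev (drop (n - K) x)" using rev_drop[of "n-K" x] lx False by simp
      also have "\<dots> = s" using sdx K2 K3 s_def by (simp add: palindrome_def)
      finally have "take K (drop 0 G) = s" by simp
      then show ?thesis unfolding s_def[symmetric]
        by (intro disjI2 occ_not1[of 0 "L - K"]) (use False len L_def socc ls in auto)
    qed
  qed
qed



lemma orbcount: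
  fixes S :: "'a list set"
  assumes fin: "finite S" and cl: "\<And>w. w \<in> S \<Longrightarrow> rev w \<in> S"
  shows "2 * card ((\<lambda>w. {w, rev w}) ` S) = card S + card {w\<in>S. palindrome w}"
proof -
  define orb where "orb = (\<lambda>w::'a list. {w, rev w})"
  define P where "P = {w\<in>S. palindrome w}"
  define N where "N = {w\<in>S. \<not> palindrome w}"
  have SPN: "S = P \<union> N" "P \<inter> N = {}" unfolding P_def N_def by auto
  have fP: "finite P" and fN: "finite N" using fin unfolding P_def N_def by auto
  have cS: "card S = card P + card N" using SPN fP fN card_Un_disjoint by metis
  have img: "orb ` S = orb ` P \<union> orb ` N" using SPN by auto
  have disj: "orb ` P \<inter> orb ` N = {}"
    unfolding orb_def P_def N_def palindrome_def by auto
  have cP: "card (orb ` P) = card P"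
  proof (rule card_image)
    show "inj_on orb P" unfolding inj_on_def orb_def P_def palindrome_def by auto
  qed
  have UN: "\<Union> (orb ` N) = N" unfolding orb_def N_def palindrome_def using cl by auto
  have cN: "2 * card (orb ` N) = card N"
  proof -
    have "2 * card (orb ` N) = card (\<Union> (orb ` N))"
    proof (rule card_partition)
      show "finite (orb ` N)" using fN by simp
      show "finite (\<Union> (orb ` N))" using UN fN by simp
      show "\<And>c. c \<in> orb ` N \<Longrightarrow> card c = 2"
        unfolding orb_def N_def palindrome_def by (auto simp: card_2_iff)
      show "\<And>c1 c2. c1 \<in> orb ` N \<Longrightarrow> c2 \<in> orb ` N \<Longrightarrow> c1 \<noteq> c2 \<Longrightarrow> c1 \<inter> c2 = {}"
        unfolding orb_def by auto
    qed
    then show ?thesis using UN by simp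
  qed
  have "2 * card (orb ` S) = 2 * card (orb ` P) + 2 * card (orb ` N)"
    using img disj fP fN card_Un_disjoint by (metis finite_imageI distrib_left)
  then show ?thesis using cP cN cS unfolding orb_def P_def by simp
qed



lemma main_n:
  fixes u :: "nat \<Rightarrow> 'a" and n :: nat
  assumes fin: "finite (range u)" and clo: "closed_under_reversal u"
    and hyp: "\<And>f. factor u f \<Longrightarrow> length f \<ge> n \<Longrightarrow> occurrences (lps f) f = 1"
  shows "2 + int (cplx u (n + 1)) - int (cplx u n) = int (pal_cplx u (n + 1)) + int (pal_cplx u n)"
proof -
  define L where "L m = {w. factor u w \<and> length w = m}" for m
  define orb where "orb w = {w, rev w}" for w :: "'a list"
  have finL: "finite (L m)" for m
  proof (rule finite_subset[of _ "{w. set w \<subseteq> range u \<and> length w = m}"])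
    show "L m \<subseteq> {w. set w \<subseteq> range u \<and> length w = m}"
    proof
      fix w assume "w \<in> L m"
      then obtain i where "w = map u [i..<i + length w]" "length w = m"
        unfolding L_def factor_def by auto
      then have "set w \<subseteq> range u" by (metis image_subset_iff rangeI set_map)
      then show "w \<in> {w. set w \<subseteq> range u \<and> length w = m}" using \<open>length w = m\<close> by simp
    qed
    show "finite {w. set w \<subseteq> range u \<and> length w = m}"
      using finite_lists_length_eq[OF fin] by simp
  qed
  have clL: "w \<in> L m \<Longrightarrow> rev w \<in> L m" for w m
    using clo unfolding L_def closed_under_reversal_def by auto
  define VO where "VO = orb ` L n"
  define EO where "EO = orb ` {w \<in> L (n+1). \<not> palindrome w}"
  define tocc where "tocc ob = (LEAST j. seg u j n \<in> ob)" for ob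
  define r0 where "r0 = orb (seg u 0 n)"
  define psi where "psi ob = orb (seg u (tocc ob - 1) (n+1))" for ob
  have F1: "ob = orb z" if "ob \<in> VO" "z \<in> ob" for ob z
    using that unfolding VO_def orb_def by auto
  have F2: "rev z \<in> ob" if "ob \<in> VO" "z \<in> ob" for ob z
    using that unfolding VO_def orb_def by auto
  have F3: "seg u (tocc ob) n \<in> ob" if obV: "ob \<in> VO" for ob
  proof -
    obtain w where w: "w \<in> L n" "ob = orb w" using obV VO_def by auto
    then obtain i where "w = seg u i n" using factor_iff unfolding L_def by blast
    then have "seg u i n \<in> ob" using w orb_def by auto
    then show ?thesis unfolding tocc_def by (rule LeastI)
  qed
  have F4: "tocc ob \<le> j" if "seg u j n \<in> ob" for ob j
    using that unfolding tocc_def by (rule Least_le)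
  have pos: "tocc ob > 0" if "ob \<in> VO" "ob \<noteq> r0" for ob
  proof (rule ccontr)
    assume "\<not> 0 < tocc ob"
    then have "seg u 0 n \<in> ob" using F3[OF that(1)] by simp
    then have "ob = r0" using F1[OF that(1)] r0_def by simp
    with that show False by simp
  qed
  have segL: "seg u a l \<in> L l" for a l unfolding L_def using factor_seg by auto
  have ts: "take n (seg u a (n+1)) = seg u a n" for a by (simp add: take_seg)
  have ds: "drop 1 (seg u a (n+1)) = seg u (a+1) n" for a by (simp add: drop_seg)
  have rd: "drop 1 (rev g) = rev (take n g)" if "length g = n+1" for g :: "'a list"
    using that rev_take[of n g] by simp
  have bij: "bij_betw psi (VO - {r0}) EO"
  proof (rule bij_betwI')
    fix ob assume ob: "ob \<in> VO - {r0}"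
    define j where "j = tocc ob"
    have j0: "j > 0" using pos ob j_def by auto
    define g where "g = seg u (j-1) (n+1)"
    have "\<not> palindrome g"
    proof
      assume pg: "palindrome g"
      have "take n g = take n (rev g)" using pg palindrome_def by metis
      also have "\<dots> = rev (drop 1 g)" using rev_drop[of 1 g] g_def by simp
      also have "\<dots> = rev (seg u j n)" using ds g_def j0 by simp
      finally have "seg u (j-1) n \<in> ob" using F2[of ob "seg u j n"] ob F3 j_def ts g_def by auto
      then have "j \<le> j - 1" using F4 j_def by auto
      with j0 show False by simp
    qed
    then show "psi ob \<in> EO" unfolding psi_def EO_def using segL g_def j_def by auto
  next
    fix o1 o2 assume o1: "o1 \<in> VO - {r0}" and o2: "o2 \<in> VO - {r0}"
    show "(psi o1 = psi o2) = (o1 = o2)"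
    proof
      assume eq: "psi o1 = psi o2"
      define j1 where "j1 = tocc o1"
      define j2 where "j2 = tocc o2"
      have j10: "j1 > 0" using pos o1 j1_def by auto
      have j20: "j2 > 0" using pos o2 j2_def by auto
      define g1 where "g1 = seg u (j1-1) (n+1)"
      define g2 where "g2 = seg u (j2-1) (n+1)"
      have "orb g1 = orb g2" using eq psi_def g1_def g2_def j1_def j2_def by simp
      then have "g1 = g2 \<or> g1 = rev g2" unfolding orb_def by auto
      then show "o1 = o2"
      proof
        assume "g1 = g2"
        then have "seg u j1 n = seg u j2 n" using ds g1_def g2_def j10 j20 by (metis Suc_pred' Suc_eq_plus1)
        then show ?thesis using F1 F3 o1 o2 j1_def j2_def by (metis DiffD1)
      next
        assume gr: "g1 = rev g2"
        have g2r: "g2 = rev g1" using gr by simp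
        have "drop 1 g2 = rev (take n g1)" unfolding g2r by (rule rd) (simp add: g1_def)
        then have "rev (seg u (j1-1) n) = seg u j2 n" using ds ts g1_def g2_def j20 by simp
        then have eq2: "seg u (j1-1) n = rev (seg u j2 n)" by (metis rev_rev_ident)
        have "seg u j2 n \<in> o2" using F3 o2 j2_def by auto
        then have "seg u (j1-1) n \<in> o2" using F2[of o2 "seg u j2 n"] o2 eq2 by auto
        then have a: "j2 \<le> j1 - 1" using F4 j2_def by auto
        have "drop 1 g1 = rev (take n g2)" unfolding gr by (rule rd) (simp add: g2_def)
        then have "rev (seg u (j2-1) n) = seg u j1 n" using ds ts g1_def g2_def j10 by simp
        then have eq1: "seg u (j2-1) n = rev (seg u j1 n)" by (metis rev_rev_ident)
        have "seg u j1 n \<in> o1" using F3 o1 j1_def by auto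
        then have "seg u (j2-1) n \<in> o1" using F2[of o1 "seg u j1 n"] o1 eq1 by auto
        then have "j1 \<le> j2 - 1" using F4 j1_def by auto
        with a j10 j20 show ?thesis by simp
      qed
    qed simp
  next
    fix e assume e: "e \<in> EO"
    then obtain f where f: "f \<in> L (n+1)" "\<not> palindrome f" "e = orb f" unfolding EO_def by auto
    have "factor u f" "length f = n+1" using f(1) unfolding L_def by auto
    then obtain i0 where "f = seg u i0 (n+1)" using factor_iff[of u f] by auto
    then have ex: "seg u i0 (n+1) \<in> e" using f orb_def by auto
    define i where "i = (LEAST i. seg u i (n+1) \<in> e)"
    have gi: "seg u i (n+1) \<in> e" unfolding i_def using ex by (rule LeastI)
    have ile: "i \<le> k" if "seg u k (n+1) \<in> e" for k unfolding i_def using that by (rule Least_le)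
    define g where "g = seg u i (n+1)"
    have ge: "e = orb g" "\<not> palindrome g" using gi f unfolding g_def orb_def palindrome_def by auto
    define x where "x = seg u (i+1) n"
    define ob where "ob = orb x"
    have oV: "ob \<in> VO" unfolding ob_def VO_def x_def using segL by auto
    have none: "seg u k n \<notin> ob" if "k \<le> i" for k
    proof
      assume kin: "seg u k n \<in> ob"
      define k' where "k' = (GREATEST k. k \<le> i \<and> seg u k n \<in> ob)"
      have k'1: "k' \<le> i \<and> seg u k' n \<in> ob" unfolding k'_def
        by (rule GreatestI_nat[where k=k and b=i]) (use that kin in auto)
      have k'2: "m \<le> k'" if "m \<le> i" "seg u m n \<in> ob" for m unfolding k'_def
        by (rule Greatest_le_nat[where b=i]) (use that in auto)
      define G where "G = seg u k' (i+n+1-k')"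
      have lG: "length G = i+n+1-k'" by (simp add: G_def)
      have xG: "x = drop (length G - n) G" unfolding G_def x_def using k'1
        by (simp add: drop_seg)
      have sG: "take n G = x \<or> take n G = rev x" using k'1 unfolding G_def ob_def orb_def
        by (auto simp: take_seg)
      have iG: "take n (drop q G) \<noteq> x \<and> take n (drop q G) \<noteq> rev x"
        if "0 < q" "q + n < length G" for q
      proof -
        have "take n (drop q G) = seg u (k'+q) n" using that lG unfolding G_def
          by (simp add: drop_seg take_seg)
        moreover have "seg u (k'+q) n \<notin> ob"
        proof
          assume a: "seg u (k'+q) n \<in> ob"
          have "k'+q \<le> i" using that lG k'1 by linarith
          then have "k'+q \<le> k'" using k'2 a by blast
          then show False using that by simp
        qed
        ultimately show ?thesis unfolding ob_def orb_def by auto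
      qed
      have "lps G = G \<or> occurrences (lps G) G \<noteq> 1"
        by (rule key[OF _ xG sG iG]) (use lG k'1 in auto)
      moreover have "occurrences (lps G) G = 1"
        by (rule hyp) (use lG k'1 factor_seg G_def in auto)
      ultimately have "lps G = G" by simp
      then have pG: "palindrome G" using lps_facts(2,3)[of G] by simp
      show False
      proof (cases "k' = i")
        case True
        then have "G = g" unfolding G_def g_def by simp
        then show ?thesis using pG ge by simp
      next
        case False
        then have kl: "k' < i" using k'1 by simp
        have "take (n+1) G = take (n+1) (rev G)" using pG palindrome_def by metis
        also have "\<dots> = rev (drop (length G - (n+1)) G)" using rev_drop[of "length G - (n+1)" G] lG kl by simp
        also have "drop (length G - (n+1)) G = g" unfolding G_def g_def using kl by (simp add: drop_seg)
        finally have "seg u k' (n+1) = rev g" unfolding G_def using kl by (simp add: take_seg)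
        then have "seg u k' (n+1) \<in> e" using ge orb_def by simp
        then have "i \<le> k'" by (rule ile)
        with kl show False by simp
      qed
    qed
    have "x \<in> ob" unfolding ob_def orb_def by simp
    then have t1: "tocc ob \<le> i+1" using F4 x_def by simp
    have t2: "tocc ob = i+1"
    proof (rule ccontr)
      assume "tocc ob \<noteq> i+1"
      then have "tocc ob \<le> i" using t1 by simp
      then show False using none F3[OF oV] by auto
    qed
    have "ob \<noteq> r0"
    proof
      assume "ob = r0"
      then have "seg u 0 n \<in> ob" unfolding r0_def orb_def by simp
      then show False using none by auto
    qed
    moreover have "psi ob = e" unfolding psi_def t2 using ge g_def by simp
    ultimately show "\<exists>ob\<in>VO - {r0}. e = psi ob" using oV by auto
  qed
  have r0V: "r0 \<in> VO" unfolding r0_def VO_def using segL by auto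
  have finVO: "finite VO" unfolding VO_def using finL by simp
  have cV: "card VO = card EO + 1"
  proof -
    have "card (VO - {r0}) = card EO" using bij_betw_same_card[OF bij] .
    moreover have "card (VO - {r0}) = card VO - 1" using r0V finVO by simp
    moreover have "card VO > 0" using r0V finVO card_gt_0_iff by auto
    ultimately show ?thesis by simp
  qed
  have c1: "2 * card VO = card (L n) + card {w\<in>L n. palindrome w}"
    unfolding VO_def orb_def by (rule orbcount[OF finL clL])
  have c2: "2 * card EO = card {w \<in> L (n+1). \<not> palindrome w} + card {w\<in>{w \<in> L (n+1). \<not> palindrome w}. palindrome w}"
    unfolding EO_def orb_def
    by (rule orbcount) (use finL clL in \<open>auto simp: palindrome_def\<close>)
  have c3: "card {w \<in> L (n+1). \<not> palindrome w} + card {w\<in>L (n+1). palindrome w} = card (L (n+1))"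
  proof -
    have "L (n+1) = {w \<in> L (n+1). \<not> palindrome w} \<union> {w\<in>L (n+1). palindrome w}" by auto
    then show ?thesis using finL[of "n+1"]
      by (metis (no_types, lifting) card_Un_disjoint disjoint_iff finite_Un mem_Collect_eq)
  qed
  have cp: "cplx u m = card (L m)" for m unfolding cplx_def L_def by simp
  have pp: "pal_cplx u m = card {w\<in>L m. palindrome w}" for m unfolding pal_cplx_def L_def by simp
  have e0: "{w\<in>{w \<in> L (n+1). \<not> palindrome w}. palindrome w} = {}" by auto
  show ?thesis using c1 c2 c3 cV e0 unfolding cp pp by simp
qed


theorem proposition4p5:
  fixes u :: "nat \<Rightarrow> 'a" and H :: int
  assumes "finite (range u)"
    and "closed_under_reversal u"
    and "\<And>f. factor u f \<Longrightarrow> int (length f) \<ge> H \<Longrightarrow> occurrences (lps f) f = 1"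
  shows "\<forall>n::nat. int n \<ge> H \<longrightarrow>
     2 + int (cplx u (n + 1)) - int (cplx u n) = int (pal_cplx u (n + 1)) + int (pal_cplx u n)"
proof (intro allI impI)
  fix n :: nat assume nH: "int n \<ge> H"
  show "2 + int (cplx u (n + 1)) - int (cplx u n) = int (pal_cplx u (n + 1)) + int (pal_cplx u n)"
  proof (rule main_n[OF assms(1,2)])
    fix f assume "factor u f" "length f \<ge> n"
    then show "occurrences (lps f) f = 1" using assms(3) nH by simp
  qed
qed

end
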